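(* Let $\mathcal A$ be an uncountable almost disjoint family on a countable set $W$. If $\mathcal A$ is Luzin then $\mathcal A$ is near-Luzin.
   Context: An almost disjoint family is a collection of infinite sets whose pairwise intersections are finite. $\mathcal A$ is Luzin iff there is an enumeration $\mathcal A=\{a_\alpha:\alpha<\omega_1\}$ such that for every finite $w\subseteq W$ and every $\alpha<\omega_1$ the set $\{\beta<\alpha: a_\alpha\cap a_\beta\subseteq w\}$ is finite. $\mathcal A$ is near-Luzin iff for all uncountable $\mathcal C,\mathcal D\subseteq\mathcal A$ the set $\bigcup\mathcal C\cap\bigcup\mathcal D$ is infinite. *)

theory Defs
  imports Main "HOL-Library.Countable_Set"
begin

text \<open>The first uncountable ordinal, as the well-order cardSuc natLeq (successor cardinal of omega).
  Its field is the set of ordinals below omega_1; strict order is the relation minus the diagonal.\<close>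

abbreviation omega1 :: "nat set rel" where
  "omega1 \<equiv> cardSuc natLeq"

abbreviation omega1_less :: "nat set \<Rightarrow> nat set \<Rightarrow> bool" where
  "omega1_less \<beta> \<alpha> \<equiv> (\<beta>, \<alpha>) \<in> omega1 \<and> \<beta> \<noteq> \<alpha>"

definition almost_disjoint :: "'a set \<Rightarrow> 'a set set \<Rightarrow> bool" where
  "almost_disjoint W \<A> \<longleftrightarrow>
     (\<forall>a\<in>\<A>. a \<subseteq> W \<and> infinite a) \<and>
     (\<forall>a\<in>\<A>. \<forall>b\<in>\<A>. a \<noteq> b \<longrightarrow> finite (a \<inter> b))"

definition luzin :: "'a set \<Rightarrow> 'a set set \<Rightarrow> bool" where
  "luzin W \<A> \<longleftrightarrow>
     (\<exists>a :: nat set \<Rightarrow> 'a set. bij_betw a (Field omega1) \<A> \<and>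
        (\<forall>w. finite w \<and> w \<subseteq> W \<longrightarrow>
           (\<forall>\<alpha>\<in>Field omega1.
              finite {\<beta>\<in>Field omega1. omega1_less \<beta> \<alpha> \<and> a \<alpha> \<inter> a \<beta> \<subseteq> w})))"

definition near_luzin :: "'a set set \<Rightarrow> bool" where
  "near_luzin \<A> \<longleftrightarrow>
     (\<forall>\<C> \<D>. \<C> \<subseteq> \<A> \<and> \<D> \<subseteq> \<A> \<and> uncountable \<C> \<and> uncountable \<D> \<longrightarrow>
        infinite (\<Union>\<C> \<inter> \<Union>\<D>))"

end

theory Submission
  imports Defs "HOL-Library.Countable_Set_Type"
begin

lemma omega1_underS_countable:
  assumes "x \<in> Field omega1"
  shows "countable (underS omega1 x)"
proof -
  have co: "Card_order omega1" by (rule cardSuc_Card_order[OF natLeq_Card_order])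
  have "(card_of (underS omega1 x), omega1) \<in> ordLess" by (rule card_of_underS[OF co assms])
  hence "(card_of (underS omega1 x), natLeq) \<in> ordLeq"
    using cardSuc_ordLeq_ordLess[OF natLeq_Card_order card_of_Card_order] by blast
  thus ?thesis using countable_card_le_natLeq by blast
qed

lemma omega1_total:
  assumes "x \<in> Field omega1" "y \<in> Field omega1" "x \<noteq> y"
  shows "(x, y) \<in> omega1 \<or> (y, x) \<in> omega1"
proof -
  have "Well_order omega1" by (rule cardSuc_Well_order[OF natLeq_Card_order])
  hence "total_on (Field omega1) omega1"
    unfolding well_order_on_def linear_order_on_def by blast
  thus ?thesis using assms unfolding total_on_def by blast
qed

theorem claim0p4:
  fixes W :: "'a set" and \<A> :: "'a set set"
  assumes "countable W"
    and "uncountable \<A>"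
    and "almost_disjoint W \<A>"
    and "luzin W \<A>"
  shows "near_luzin \<A>"
  unfolding near_luzin_def
proof (intro allI impI)
  fix C D
  assume H: "C \<subseteq> \<A> \<and> D \<subseteq> \<A> \<and> uncountable C \<and> uncountable D"
  hence CA: "C \<subseteq> \<A>" and DA: "D \<subseteq> \<A>" and uC: "uncountable C" and uD: "uncountable D"
    by simp_all
  show "infinite (\<Union>C \<inter> \<Union>D)"
  proof
  assume fin: "finite (\<Union> C \<inter> \<Union> D)"
  obtain a where bij: "bij_betw a (Field omega1) \<A>" and
    lz0: "\<forall>w. finite w \<and> w \<subseteq> W \<longrightarrow>
           (\<forall>\<alpha>\<in>Field omega1.
              finite {\<beta>\<in>Field omega1. omega1_less \<beta> \<alpha> \<and> a \<alpha> \<inter> a \<beta> \<subseteq> w})"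
    using assms(4) unfolding luzin_def by (elim exE conjE) 
  have lz: "finite {\<beta>\<in>Field omega1. omega1_less \<beta> \<alpha> \<and> a \<alpha> \<inter> a \<beta> \<subseteq> w}"
    if "finite w" "w \<subseteq> W" "\<alpha> \<in> Field omega1" for w \<alpha>
    using lz0 that by simp
  define IC where "IC = {\<beta>\<in>Field omega1. a \<beta> \<in> C}"
  define ID where "ID = {\<beta>\<in>Field omega1. a \<beta> \<in> D}"
  have "a ` IC = C" using bij CA unfolding IC_def bij_betw_def by force
  hence "uncountable IC" using uC countable_image by metis
  hence "infinite IC" using countable_finite by blast
  then obtain f :: "nat \<Rightarrow> nat set" where f: "inj f" "range f \<subseteq> IC"
    using infinite_countable_subset by blast
  define S where "S = range f"
  have Sinf: "infinite S" unfolding S_def using f(1) range_inj_infinite by blast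
  have SF: "S \<subseteq> Field omega1" using f(2) unfolding S_def IC_def by blast
  have "countable (S \<union> (\<Union>s\<in>S. underS omega1 s))"
  proof -
    have "countable S" unfolding S_def by simp
    moreover have "\<And>s. s \<in> S \<Longrightarrow> countable (underS omega1 s)"
      using SF omega1_underS_countable by blast
    ultimately show ?thesis by blast
  qed
  moreover have "a ` ID = D" using bij DA unfolding ID_def bij_betw_def by force
  hence "uncountable ID" using uD countable_image by metis
  ultimately obtain \<alpha> where \<alpha>: "\<alpha> \<in> ID" "\<alpha> \<notin> S" "\<And>s. s \<in> S \<Longrightarrow> \<alpha> \<notin> underS omega1 s"
  proof -
    have "\<not> ID \<subseteq> S \<union> (\<Union>s\<in>S. underS omega1 s)"
      using \<open>uncountable ID\<close> \<open>countable (S \<union> (\<Union>s\<in>S. underS omega1 s))\<close> countable_subset by blast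
    then obtain x where "x \<in> ID" "x \<notin> S \<union> (\<Union>s\<in>S. underS omega1 s)" by blast
    thus ?thesis using that by blast
  qed
  define w where "w = \<Union> C \<inter> \<Union> D"
  have wfin: "finite w" using fin unfolding w_def by simp
  have wW: "w \<subseteq> W" using CA assms(3) unfolding w_def almost_disjoint_def by blast
  have \<alpha>F: "\<alpha> \<in> Field omega1" using \<alpha>(1) unfolding ID_def by blast
  have "S \<subseteq> {\<beta>\<in>Field omega1. omega1_less \<beta> \<alpha> \<and> a \<alpha> \<inter> a \<beta> \<subseteq> w}"
  proof
    fix s assume s: "s \<in> S"
    have sF: "s \<in> Field omega1" using s SF by blast
    have ne: "s \<noteq> \<alpha>" using s \<alpha>(2) by blast
    have "(s, \<alpha>) \<in> omega1"
      using omega1_total[OF sF \<alpha>F ne] \<alpha>(3)[OF s] ne unfolding underS_def by blast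
    moreover have "a \<alpha> \<inter> a s \<subseteq> w"
      using s f(2) \<alpha>(1) unfolding S_def IC_def ID_def w_def by blast
    ultimately show "s \<in> {\<beta>\<in>Field omega1. omega1_less \<beta> \<alpha> \<and> a \<alpha> \<inter> a \<beta> \<subseteq> w}"
      using sF ne by blast
  qed
  thus False using lz[OF wfin wW \<alpha>F] Sinf finite_subset by blast
  qed
qed

end
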